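(* Let $n\ge 1$, let $C_u(v_1),\ldots,C_u(v_n)>0$ and $R_1,\ldots,R_n>0$, and run the algorithm described in the context on these inputs. For every $\alpha$ with $1\le\alpha\le n$: if $\sum_{i=1}^n U_i[\alpha] \geq (n-2)R_\alpha$, then $\sum_{i=1}^n r_{\alpha,i} = R_\alpha$ at the end of iteration $\alpha$ of the outer loop.
   Context: Sub-stream rate assigning algorithm. Input: $n$, uplink capacities $C_u(v_1),\ldots,C_u(v_n)$ and rates $R_1,\ldots,R_n$. Initialize $r_{i,j}:=0$ for all $1\le i,j\le n$ and $U_i := C_u(v_i)-R_i$ for $1\le i\le n$. Outer loop: for $i=1$ to $n$: set $R'_i := R_i$; inner loop: for $j=1$ to $n$: if $(n-2)R'_i > U_j$ then set $r_{i,j} := U_j/(n-2)$, else set $r_{i,j} := R'_i$; then set $U_j := U_j-(n-2)r_{i,j}$ and $R'_i := R'_i - r_{i,j}$; if $R'_i = 0$, exit the inner loop. Output all $r_{i,j}$. Notation: $U_i[\alpha]$ denotes the value of the variable $U_i$ at the start of iteration $\alpha$ of the outer loop. *)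

theory Defs
  imports Main Complex_Main
begin

text \<open>State of the sub-stream rate assigning algorithm:
  (U, r, R', stop) where U :: nat => real holds the variables U_1..U_n,
  r :: nat => nat => real holds r_{i,j}, R' is the current R'_i and
  stop records that the inner loop has been exited.\<close>

type_synonym alg_state = "(nat \<Rightarrow> real) \<times> (nat \<Rightarrow> nat \<Rightarrow> real) \<times> real \<times> bool"

text \<open>One iteration j of the inner loop inside outer iteration i.
  The factor (n-2) is computed in the reals.\<close>
definition inner_step :: "nat \<Rightarrow> nat \<Rightarrow> alg_state \<Rightarrow> nat \<Rightarrow> alg_state" where
  "inner_step n i st j =
     (case st of (U, r, R', stop) \<Rightarrow>
        if stop then st
        else (let x = (if (real n - 2) * R' > U j then U j / (real n - 2) else R');
                  U' = U(j := U j - (real n - 2) * x);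
                  r' = r(i := (r i)(j := x));
                  R'' = R' - x
              in (U', r', R'', R'' = 0)))"

definition outer_step :: "nat \<Rightarrow> (nat \<Rightarrow> real) \<Rightarrow> alg_state \<Rightarrow> nat \<Rightarrow> alg_state" where
  "outer_step n R st i =
     (case st of (U, r, _, _) \<Rightarrow> foldl (inner_step n i) (U, r, R i, False) [1..<n+1])"

definition alg_init :: "(nat \<Rightarrow> real) \<Rightarrow> (nat \<Rightarrow> real) \<Rightarrow> alg_state" where
  "alg_init Cu R = ((\<lambda>i. Cu i - R i), (\<lambda>i j. 0), 0, False)"

definition alg_after :: "nat \<Rightarrow> (nat \<Rightarrow> real) \<Rightarrow> (nat \<Rightarrow> real) \<Rightarrow> nat \<Rightarrow> alg_state" where
  "alg_after n Cu R k = foldl (outer_step n R) (alg_init Cu R) [1..<k+1]"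

text \<open>U_i[alpha]: value of U_i at the start of outer iteration alpha.\<close>
definition U_at :: "nat \<Rightarrow> (nat \<Rightarrow> real) \<Rightarrow> (nat \<Rightarrow> real) \<Rightarrow> nat \<Rightarrow> nat \<Rightarrow> real" where
  "U_at n Cu R \<alpha> i = fst (alg_after n Cu R (\<alpha> - 1)) i"

definition r_after :: "nat \<Rightarrow> (nat \<Rightarrow> real) \<Rightarrow> (nat \<Rightarrow> real) \<Rightarrow> nat \<Rightarrow> nat \<Rightarrow> nat \<Rightarrow> real" where
  "r_after n Cu R k i j = fst (snd (alg_after n Cu R k)) i j"

end

theory Submission
  imports Defs
begin

lemma fold_stopped: "foldl (inner_step n i) (U, r, R', True) js = (U, r, R', True)"
  by (induction js) (auto simp: inner_step_def)

lemma fold_other_row: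
  "i' \<noteq> i \<Longrightarrow> fst (snd (foldl (inner_step n i) st js)) i' = fst (snd st) i'"
proof (induction js arbitrary: st)
  case Nil then show ?case by simp
next
  case (Cons j js)
  obtain U r R' s where st: "st = (U, r, R', s)" by (cases st) auto
  have "fst (snd (inner_step n i st j)) i' = fst (snd st) i'"
    using Cons.prems by (auto simp: st inner_step_def Let_def)
  with Cons.IH[of "inner_step n i st j"] Cons.prems show ?case by simp
qed

lemma fold_stop_zero:
  "(snd (snd (snd st)) \<longrightarrow> fst (snd (snd st)) = 0) \<Longrightarrow>
   (snd (snd (snd (foldl (inner_step n i) st js))) \<longrightarrow> fst (snd (snd (foldl (inner_step n i) st js))) = 0)"
proof (induction js arbitrary: st)
  case Nil then show ?case by simp
next
  case (Cons j js)
  obtain U r R' s where st: "st = (U, r, R', s)" by (cases st) auto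
  have "snd (snd (snd (inner_step n i st j))) \<longrightarrow> fst (snd (snd (inner_step n i st j))) = 0"
    using Cons.prems by (auto simp: st inner_step_def Let_def)
  with Cons.IH[of "inner_step n i st j"] show ?case by simp
qed

lemma fold_row_sum:
  assumes "distinct js" "set js \<subseteq> A" "finite A" "\<forall>j\<in>set js. r i j = 0"
  shows "(\<Sum>j\<in>A. fst (snd (foldl (inner_step n i) (U, r, R', s) js)) i j)
          + fst (snd (snd (foldl (inner_step n i) (U, r, R', s) js)))
         = (\<Sum>j\<in>A. r i j) + R'"
  using assms
proof (induction js arbitrary: U r R' s)
  case Nil then show ?case by simp
next
  case (Cons j js)
  show ?case
  proof (cases s)
    case True
    have "inner_step n i (U, r, R', s) j = (U, r, R', True)" using True by (simp add: inner_step_def)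
    then show ?thesis using True by (simp add: fold_stopped)
  next
    case False
    define x where "x = (if (real n - 2) * R' > U j then U j / (real n - 2) else R')"
    have step: "inner_step n i (U, r, R', s) j =
       (U(j := U j - (real n - 2) * x), r(i := (r i)(j := x)), R' - x, R' - x = 0)"
      using False by (simp add: inner_step_def x_def Let_def)
    have IH: "(\<Sum>j'\<in>A. fst (snd (foldl (inner_step n i) (U(j := U j - (real n - 2) * x), r(i := (r i)(j := x)), R' - x, R' - x = 0) js)) i j')
          + fst (snd (snd (foldl (inner_step n i) (U(j := U j - (real n - 2) * x), r(i := (r i)(j := x)), R' - x, R' - x = 0) js)))
         = (\<Sum>j'\<in>A. (r(i := (r i)(j := x))) i j') + (R' - x)"
      apply (rule Cons.IH)
      using Cons.prems by auto
    have jA: "j \<in> A" and rj: "r i j = 0" using Cons.prems by auto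
    have "(\<Sum>j'\<in>A. (r(i := (r i)(j := x))) i j') = (\<Sum>j'\<in>A. r i j') - r i j + x"
      using sum.remove[OF Cons.prems(3) jA, of "(r i)(j := x)"]
            sum.remove[OF Cons.prems(3) jA, of "r i"] by simp
    then show ?thesis using IH step rj by simp
  qed
qed

lemma fold_not_stopped:
  assumes "distinct js" "js \<noteq> []"
    and "\<not> snd (snd (snd (foldl (inner_step n i) (U, r, R', False) js)))"
  shows "(\<Sum>j\<in>set js. U j) < (real n - 2) * R'"
  using assms
proof (induction js arbitrary: U r R')
  case Nil then show ?case by simp
next
  case (Cons j js)
  define c where "c = real n - 2"
  show ?case
  proof (cases "c * R' > U j")
    case False
    then have "inner_step n i (U, r, R', False) j = (U(j := U j - c * R'), r(i := (r i)(j := R')), 0, True)"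
      by (simp add: inner_step_def c_def Let_def)
    with Cons.prems(3) show ?thesis by (simp add: fold_stopped)
  next
    case True
    define x where "x = U j / c"
    have step: "inner_step n i (U, r, R', False) j =
       (U(j := U j - c * x), r(i := (r i)(j := x)), R' - x, R' - x = 0)"
      using True by (simp add: inner_step_def x_def c_def Let_def)
    have ne: "R' - x \<noteq> 0"
    proof
      assume "R' - x = 0"
      with step Cons.prems(3) show False by (simp add: fold_stopped)
    qed
    have key: "U j + c * (R' - x) \<le> c * R'"
    proof (cases "c = 0")
      case True then show ?thesis using \<open>c * R' > U j\<close> by simp
    next
      case False then show ?thesis by (simp add: x_def algebra_simps)
    qed
    show ?thesis
    proof (cases "js = []")
      case True then show ?thesis using \<open>c * R' > U j\<close> c_def by simp
    next
      case False
      have ns: "\<not> snd (snd (snd (foldl (inner_step n i) (U(j := U j - c * x), r(i := (r i)(j := x)), R' - x, False) js)))"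
        using Cons.prems(3) step ne by simp
      have "(\<Sum>j'\<in>set js. (U(j := U j - c * x)) j') < c * (R' - x)"
        using Cons.IH[OF _ False ns] Cons.prems(1) c_def by simp
      moreover have "(\<Sum>j'\<in>set js. (U(j := U j - c * x)) j') = (\<Sum>j'\<in>set js. U j')"
        using Cons.prems(1) by (intro sum.cong) auto
      ultimately show ?thesis using key Cons.prems(1) c_def by simp
    qed
  qed
qed

lemma row_zero: "k < a \<Longrightarrow> fst (snd (alg_after n Cu R k)) a = (\<lambda>j. 0)"
proof (induction k)
  case 0 then show ?case by (simp add: alg_after_def alg_init_def)
next
  case (Suc k)
  have "alg_after n Cu R (Suc k) = outer_step n R (alg_after n Cu R k) (Suc k)"
    by (simp add: alg_after_def)
  moreover obtain U r R' s where st: "alg_after n Cu R k = (U, r, R', s)" by (cases "alg_after n Cu R k") auto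
  ultimately show ?case using Suc fold_other_row[of a "Suc k" n "(U, r, R (Suc k), False)"]
    by (simp add: outer_step_def)
qed

theorem propositionB1:
  fixes n :: nat and Cu R :: "nat \<Rightarrow> real" and \<alpha> :: nat
  assumes "n \<ge> 1"
    and "\<And>i. 1 \<le> i \<Longrightarrow> i \<le> n \<Longrightarrow> Cu i > 0"
    and "\<And>i. 1 \<le> i \<Longrightarrow> i \<le> n \<Longrightarrow> R i > 0"
    and "1 \<le> \<alpha>" and "\<alpha> \<le> n"
    and "(\<Sum>i=1..n. U_at n Cu R \<alpha> i) \<ge> (real n - 2) * R \<alpha>"
  shows "(\<Sum>i=1..n. r_after n Cu R \<alpha> \<alpha> i) = R \<alpha>"
proof -
  obtain U r R' s where st: "alg_after n Cu R (\<alpha> - 1) = (U, r, R', s)"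
    by (cases "alg_after n Cu R (\<alpha> - 1)") auto
  have rz: "r \<alpha> = (\<lambda>j. 0)" using row_zero[of "\<alpha> - 1" \<alpha> n Cu R] st assms(4) by simp
  have Ueq: "U_at n Cu R \<alpha> i = U i" for i using st by (simp add: U_at_def)
  have "[1..<\<alpha>+1] = [1..<\<alpha> - 1 + 1] @ [\<alpha>]" using assms(4) by simp
  then have aa: "alg_after n Cu R \<alpha> = outer_step n R (alg_after n Cu R (\<alpha> - 1)) \<alpha>"
    unfolding alg_after_def by simp
  define F where "F = foldl (inner_step n \<alpha>) (U, r, R \<alpha>, False) [1..<n+1]"
  have aF: "alg_after n Cu R \<alpha> = F" using aa st by (simp add: outer_step_def F_def)
  have stopped: "snd (snd (snd F))"
  proof (rule ccontr)
    assume "\<not> snd (snd (snd F))"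
    then have "(\<Sum>j\<in>set [1..<n+1]. U j) < (real n - 2) * R \<alpha>"
      using fold_not_stopped[of "[1..<n+1]" n \<alpha> U r "R \<alpha>"] assms(1) by (simp add: F_def)
    moreover have "set [1..<n+1] = {1..n}" by auto
    ultimately show False using assms(6) Ueq by simp
  qed
  have z: "fst (snd (snd F)) = 0"
    using fold_stop_zero[of "(U, r, R \<alpha>, False)" n \<alpha> "[1..<n+1]"] stopped by (simp add: F_def)
  have "(\<Sum>j\<in>{1..n}. fst (snd F) \<alpha> j) + fst (snd (snd F)) = (\<Sum>j\<in>{1..n}. r \<alpha> j) + R \<alpha>"
    unfolding F_def by (rule fold_row_sum) (auto simp: rz)
  then show ?thesis using z rz by (simp add: r_after_def aF)
qed

end
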